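(* Let $\sigma_0,s_1,s_2$ be linearly independent real bivariate polynomials of exact degree $k$, none having multiple factors. Suppose that every nonzero linear combination $s$ of $s_1,s_2$ differs from $\sigma_0$ by a factor from $\Pi_2$, i.e. there are relatively prime $\beta,\bar\beta\in\Pi_2$ with $s\beta=\sigma_0\bar\beta$. Then $$\sigma_0=\tilde\sigma_0\beta_0,\quad s_1=\tilde\sigma_0\beta_1,\quad s_2=\tilde\sigma_0\beta_2,\qquad \tilde\sigma_0\in\Pi_{k-1},\ \beta_i\in\Pi_2.$$ Moreover, if $\beta_0$ and $\beta_1$ are relatively prime, then $\tilde\sigma_0$ is uniquely determined by the first two of these relations. Furthermore, if $\beta_0$ has a nonconstant common factor with $\beta_1$ and a nonconstant common factor with $\beta_2$, then either (i) $\beta_i=\ell\ell_i$, $i=0,1,2$, for a common linear polynomial $\ell$ and linear polynomials $\ell_i$, or (ii) $\beta_0$ and $\beta_1+\epsilon\beta_2$ are relatively prime for every $\epsilon>0$.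
   Context: $\Pi_m$ denotes the space of real bivariate polynomials of total degree at most $m$. A polynomial has a multiple factor if it is divisible by $r^2$ for some polynomial $r$ of degree $\ge1$. *)

theory Defs
  imports "HOL-Computational_Algebra.Polynomial_Factorial"
begin

(* Real bivariate polynomials R[x,y] are represented as real poly poly:
   polynomials in y whose coefficients are polynomials in x. *)
type_synonym bipoly = "real poly poly"

definition bconst :: "real \<Rightarrow> bipoly" where
  "bconst c = [:[:c:]:]"

(* total degree; the zero polynomial gets total degree 0 *)
definition tdeg :: "bipoly \<Rightarrow> nat" where
  "tdeg p = Max ({0} \<union> {degree (coeff p i) + i | i. coeff p i \<noteq> 0})"

definition Pi :: "nat \<Rightarrow> bipoly set" where
  "Pi m = {p. tdeg p \<le> m}"

definition has_multiple_factor :: "bipoly \<Rightarrow> bool" where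
  "has_multiple_factor p \<longleftrightarrow> (\<exists>r. tdeg r \<ge> 1 \<and> r ^ 2 dvd p)"

definition lin_indep3 :: "bipoly \<Rightarrow> bipoly \<Rightarrow> bipoly \<Rightarrow> bool" where
  "lin_indep3 p q r \<longleftrightarrow>
     (\<forall>a b c. bconst a * p + bconst b * q + bconst c * r = 0 \<longrightarrow> a = 0 \<and> b = 0 \<and> c = 0)"

end

theory Submission imports Defs "HOL-Computational_Algebra.Field_as_Ring" begin
lemma tdeg_fin: "finite {degree (coeff p i) + i | i. coeff p i \<noteq> 0}"
proof -
  have "{degree (coeff p i) + i | i. coeff p i \<noteq> 0} \<subseteq> (\<lambda>i. degree (coeff p i) + i) ` {..degree p}"
    using le_degree by fastforce
  thus ?thesis by (rule finite_subset) simp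
qed

lemma tdeg_ge: "coeff p i \<noteq> 0 \<Longrightarrow> degree (coeff p i) + i \<le> tdeg p"
  unfolding tdeg_def by (rule Max_ge) (use tdeg_fin in auto)

lemma tdeg_le_iff: "tdeg p \<le> d \<longleftrightarrow> (\<forall>i. coeff p i \<noteq> 0 \<longrightarrow> degree (coeff p i) + i \<le> d)"
  unfolding tdeg_def using tdeg_fin[of p] by (subst Max_le_iff) auto

lemma tdeg_attained: assumes "p \<noteq> 0" shows "\<exists>i. coeff p i \<noteq> 0 \<and> degree (coeff p i) + i = tdeg p"
proof -
  obtain j where j: "coeff p j \<noteq> 0" using assms by (metis leading_coeff_neq_0)
  have "tdeg p \<in> {0} \<union> {degree (coeff p i) + i | i. coeff p i \<noteq> 0}"
    unfolding tdeg_def by (rule Max_in) (use tdeg_fin in auto)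
  then show ?thesis
  proof
    assume "tdeg p \<in> {0}" then have "tdeg p = 0" by simp
    with tdeg_ge[OF j] show ?thesis using j by auto
  next
    assume "tdeg p \<in> {degree (coeff p i) + i | i. coeff p i \<noteq> 0}" thus ?thesis by auto
  qed
qed

lemma tdeg_mult: fixes p q :: bipoly assumes p: "p \<noteq> 0" and q: "q \<noteq> 0"
  shows "tdeg (p * q) = tdeg p + tdeg q"
proof (rule antisym)
  show "tdeg (p*q) \<le> tdeg p + tdeg q"
    unfolding tdeg_le_iff
  proof (intro allI impI)
    fix n assume nz: "coeff (p*q) n \<noteq> 0"
    have cm: "coeff (p*q) n = (\<Sum>i\<le>n. coeff p i * coeff q (n-i))" by (rule coeff_mult)
    have bound: "degree (coeff p i * coeff q (n-i)) + n \<le> tdeg p + tdeg q"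
      if "i \<le> n" "coeff p i * coeff q (n-i) \<noteq> 0" for i
    proof -
      from that have a: "coeff p i \<noteq> 0" "coeff q (n-i) \<noteq> 0" by auto
      have "degree (coeff p i * coeff q (n-i)) = degree (coeff p i) + degree (coeff q (n-i))"
        using a by (rule degree_mult_eq)
      with tdeg_ge[OF a(1)] tdeg_ge[OF a(2)] \<open>i \<le> n\<close> show ?thesis by linarith
    qed
    obtain i where i: "i \<le> n" "coeff p i * coeff q (n-i) \<noteq> 0"
      using nz cm by (metis (no_types, lifting) atMost_iff sum.neutral)
    have nle: "n \<le> tdeg p + tdeg q" using bound[OF i] by linarith
    have "degree (coeff (p*q) n) \<le> tdeg p + tdeg q - n"
      unfolding cm
    proof (rule degree_sum_le)
      fix i assume "i \<in> {..n}"
      then show "degree (coeff p i * coeff q (n-i)) \<le> tdeg p + tdeg q - n"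
        using bound[of i] by (cases "coeff p i * coeff q (n-i) = 0") auto
    qed simp
    with nle show "degree (coeff (p*q) n) + n \<le> tdeg p + tdeg q" by linarith
  qed
next
  define d e where "d = tdeg p" and "e = tdeg q"
  define P where "P i \<longleftrightarrow> coeff p i \<noteq> 0 \<and> degree (coeff p i) + i = d" for i
  define Q where "Q j \<longleftrightarrow> coeff q j \<noteq> 0 \<and> degree (coeff q j) + j = e" for j
  define i0 where "i0 = (LEAST i. P i)"
  define j0 where "j0 = (LEAST j. Q j)"
  have Pi0: "P i0" unfolding i0_def using tdeg_attained[OF p] by (metis LeastI P_def d_def)
  have Qj0: "Q j0" unfolding j0_def using tdeg_attained[OF q] by (metis LeastI Q_def e_def)
  have Pl: "\<not> P i" if "i < i0" for i using that not_less_Least unfolding i0_def by blast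
  have Ql: "\<not> Q j" if "j < j0" for j using that not_less_Least unfolding j0_def by blast
  define n where "n = i0 + j0"
  define m where "m = degree (coeff p i0) + degree (coeff q j0)"
  have dm: "m + n = d + e" using Pi0 Qj0 unfolding P_def Q_def m_def n_def by linarith
  have zero: "coeff (coeff p i * coeff q (n-i)) m = 0" if "i \<le> n" "i \<noteq> i0" for i
  proof (cases "coeff p i = 0 \<or> coeff q (n-i) = 0")
    case True then show ?thesis by auto
  next
    case False
    have gp: "degree (coeff p i) + i \<le> d" using tdeg_ge False d_def by blast
    have gq: "degree (coeff q (n-i)) + (n-i) \<le> e" using tdeg_ge False e_def by blast
    have "degree (coeff p i) + degree (coeff q (n-i)) < m"
    proof (cases "i < i0")
      case True
      then have "degree (coeff p i) + i \<noteq> d" using Pl False unfolding P_def by blast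
      with gp gq dm \<open>i \<le> n\<close> show ?thesis by linarith
    next
      case False2: False
      then have "n - i < j0" using that n_def by linarith
      then have "degree (coeff q (n-i)) + (n-i) \<noteq> e" using Ql False unfolding Q_def by blast
      with gp gq dm \<open>i \<le> n\<close> show ?thesis by linarith
    qed
    then have "degree (coeff p i * coeff q (n-i)) < m"
      using degree_mult_le[of "coeff p i" "coeff q (n-i)"] by linarith
    then show ?thesis by (simp add: coeff_eq_0)
  qed
  have "coeff (coeff (p*q) n) m = (\<Sum>i\<le>n. coeff (coeff p i * coeff q (n-i)) m)"
    by (simp add: coeff_mult coeff_sum)
  also have "\<dots> = coeff (coeff p i0 * coeff q (n-i0)) m"
  proof -
    have "i0 \<in> {..n}" unfolding n_def by simp
    then have "(\<Sum>i\<le>n. coeff (coeff p i * coeff q (n-i)) m) = coeff (coeff p i0 * coeff q (n-i0)) m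
       + (\<Sum>i\<in>{..n}-{i0}. coeff (coeff p i * coeff q (n-i)) m)"
      by (simp add: sum.remove)
    also have "(\<Sum>i\<in>{..n}-{i0}. coeff (coeff p i * coeff q (n-i)) m) = 0"
      by (rule sum.neutral) (use zero in auto)
    finally show ?thesis by simp
  qed
  also have "\<dots> = lead_coeff (coeff p i0) * lead_coeff (coeff q j0)"
    unfolding m_def n_def by (simp add: coeff_mult_degree_sum)
  also have "\<dots> \<noteq> 0" using Pi0 Qj0 unfolding P_def Q_def by simp
  finally have "coeff (coeff (p*q) n) m \<noteq> 0" .
  then have "m \<le> degree (coeff (p*q) n)" and "coeff (p*q) n \<noteq> 0" by (auto intro: le_degree)
  with tdeg_ge[OF this(2)] dm show "tdeg p + tdeg q \<le> tdeg (p*q)" unfolding d_def e_def by linarith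
qed


lemma bconst_mult: "bconst a * bconst b = bconst (a*b)" by (simp add: bconst_def)
lemma bconst_add: "bconst a + bconst b = bconst (a+b)" by (simp add: bconst_def)
lemma bconst_diff: "bconst a - bconst b = bconst (a-b)" by (simp add: bconst_def)
lemma bconst_1: "bconst 1 = 1" by (simp add: bconst_def one_pCons)
lemma bconst_0: "bconst 0 = 0" by (simp add: bconst_def)
lemma bconst_unit: assumes "c \<noteq> 0" shows "is_unit (bconst c)"
proof -
  have "bconst c * bconst (1/c) = 1" using assms by (simp add: bconst_mult bconst_1)
  thus ?thesis by (metis dvd_triv_left)
qed
lemma unit_bconst: assumes "is_unit (p::bipoly)" shows "\<exists>c. c \<noteq> 0 \<and> p = bconst c"
proof -
  from is_unit_poly_iff[THEN iffD1, OF assms] obtain c where c: "p = [:c:]" "is_unit c" by blast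
  from is_unit_poly_iff[THEN iffD1, OF c(2)] obtain d :: real where d: "c = [:d:]" "d dvd 1" by blast
  have "d \<noteq> 0" using d(2) by auto
  moreover have "p = bconst d" unfolding bconst_def using c d by simp
  ultimately show ?thesis by blast
qed
lemma tdeg0_unit: assumes "(p::bipoly) \<noteq> 0" "tdeg p = 0" shows "is_unit p"
proof -
  have h: "coeff p i \<noteq> 0 \<Longrightarrow> i = 0 \<and> degree (coeff p i) = 0" for i
    using tdeg_ge[of p i] assms(2) by auto
  have p: "p = [:coeff p 0:]"
  proof (rule poly_eqI)
    fix n show "coeff p n = coeff [:coeff p 0:] n"
      using h[of n] by (cases n) auto
  qed
  have c0: "coeff p 0 \<noteq> 0" using assms(1) p by auto
  have c: "coeff p 0 = [:coeff (coeff p 0) 0:]"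
    using h[OF c0] by (simp add: degree_0_id)
  have "coeff (coeff p 0) 0 \<noteq> 0" using c c0 by auto
  then have "is_unit (bconst (coeff (coeff p 0) 0))" by (rule bconst_unit)
  then show ?thesis using p c unfolding bconst_def by simp
qed
lemma tdeg_dvd: assumes "(a::bipoly) dvd b" "b \<noteq> 0" shows "tdeg a \<le> tdeg b"
proof -
  obtain c where "b = a * c" using assms(1) by blast
  with assms(2) tdeg_mult[of a c] show ?thesis by auto
qed

theorem mainTheorem6:
  fixes \<sigma>0 s1 s2 :: bipoly and k :: nat
  assumes indep: "lin_indep3 \<sigma>0 s1 s2"
    and deg: "\<sigma>0 \<noteq> 0" "s1 \<noteq> 0" "s2 \<noteq> 0" "tdeg \<sigma>0 = k" "tdeg s1 = k" "tdeg s2 = k"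
    and sqf: "\<not> has_multiple_factor \<sigma>0" "\<not> has_multiple_factor s1" "\<not> has_multiple_factor s2"
    and comb: "\<And>a b. (a, b) \<noteq> (0, 0) \<Longrightarrow>
        \<exists>\<beta> \<beta>'. \<beta> \<in> Pi 2 \<and> \<beta>' \<in> Pi 2 \<and> coprime \<beta> \<beta>' \<and>
              (bconst a * s1 + bconst b * s2) * \<beta> = \<sigma>0 * \<beta>'"
  shows "\<exists>\<sigma>t \<beta>0 \<beta>1 \<beta>2.
      \<sigma>t \<in> Pi (k - 1) \<and> \<beta>0 \<in> Pi 2 \<and> \<beta>1 \<in> Pi 2 \<and> \<beta>2 \<in> Pi 2 \<and>
      \<sigma>0 = \<sigma>t * \<beta>0 \<and> s1 = \<sigma>t * \<beta>1 \<and> s2 = \<sigma>t * \<beta>2 \<and>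
      (coprime \<beta>0 \<beta>1 \<longrightarrow>
         (\<forall>\<sigma>' \<gamma>0 \<gamma>1. \<sigma>0 = \<sigma>' * \<gamma>0 \<and> s1 = \<sigma>' * \<gamma>1 \<and> coprime \<gamma>0 \<gamma>1 \<longrightarrow>
            (\<exists>c. c \<noteq> 0 \<and> \<sigma>' = bconst c * \<sigma>t))) \<and>
      ((\<exists>r. tdeg r \<ge> 1 \<and> r dvd \<beta>0 \<and> r dvd \<beta>1) \<and>
       (\<exists>r. tdeg r \<ge> 1 \<and> r dvd \<beta>0 \<and> r dvd \<beta>2) \<longrightarrow>
         (\<exists>l l0 l1 l2. tdeg l = 1 \<and> tdeg l0 = 1 \<and> tdeg l1 = 1 \<and> tdeg l2 = 1 \<and>
              \<beta>0 = l * l0 \<and> \<beta>1 = l * l1 \<and> \<beta>2 = l * l2)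
         \<or> (\<forall>\<epsilon>::real. \<epsilon> > 0 \<longrightarrow> coprime \<beta>0 (\<beta>1 + bconst \<epsilon> * \<beta>2)))"
  
proof -
  define s where "s t = s1 + bconst t * s2" for t
  have key: "tdeg \<sigma>0 \<le> tdeg (gcd \<sigma>0 (s t)) + 2" for t
  proof -
    have "(1::real, t) \<noteq> (0, 0)" by simp
    from comb[OF this] obtain \<beta> \<beta>' where b: "\<beta> \<in> Pi 2" "\<beta>' \<in> Pi 2" "coprime \<beta> \<beta>'"
      "s t * \<beta> = \<sigma>0 * \<beta>'"
      unfolding s_def bconst_1 by auto
    have "\<beta> \<noteq> 0"
    proof
      assume "\<beta> = 0"
      then have "\<beta>' = 0" using b(4) deg(1) by simp
      with \<open>\<beta> = 0\<close> b(3) show False by simp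
    qed
    have "\<beta> dvd \<sigma>0 * \<beta>'" using b(4) by (metis dvd_triv_right)
    hence "\<beta> dvd \<sigma>0" using b(3) coprime_dvd_mult_left_iff by blast
    then obtain h where h: "\<sigma>0 = \<beta> * h" by blast
    have "\<beta> * s t = \<beta> * (h * \<beta>')" using b(4) h by (simp add: ac_simps)
    hence st: "s t = h * \<beta>'" using \<open>\<beta> \<noteq> 0\<close> by simp
    have h0: "h \<noteq> 0" using h deg(1) by auto
    have hd: "h dvd gcd \<sigma>0 (s t)" using h st by simp
    have g0: "gcd \<sigma>0 (s t) \<noteq> 0" using deg(1) by simp
    have "tdeg h \<le> tdeg (gcd \<sigma>0 (s t))" using tdeg_dvd[OF hd g0] .
    moreover have "tdeg \<sigma>0 = tdeg \<beta> + tdeg h" using h tdeg_mult[OF \<open>\<beta> \<noteq> 0\<close> h0] by simp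
    moreover have "tdeg \<beta> \<le> 2" using b(1) by (simp add: Pi_def)
    ultimately show ?thesis by linarith
  qed
  define G where "G = gcd \<sigma>0 (gcd s1 s2)"
  have G0: "G \<noteq> 0" using deg(1) by (simp add: G_def)
  have Gd: "G dvd \<sigma>0" "G dvd s1" "G dvd s2" unfolding G_def by (meson gcd_dvd1 gcd_dvd2 dvd_trans)+
  have Gs: "G dvd s t" for t using Gd unfolding s_def by simp
  have comm: "c dvd G" if "c dvd \<sigma>0" "c dvd s t" "c dvd s u" "t \<noteq> u" for c t u
  proof -
    have "c dvd s t - s u" using that by (simp add: dvd_diff)
    also have "s t - s u = bconst (t - u) * s2"
      unfolding s_def bconst_diff[symmetric] by (simp add: algebra_simps)
    finally have c2: "c dvd s2" using bconst_unit[of "t - u"] that(4) dvd_mult_unit_iff' by auto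
    have "c dvd s t - bconst t * s2" using that(2) c2 by (simp add: dvd_diff)
    hence c1: "c dvd s1" unfolding s_def by simp
    show ?thesis unfolding G_def using that(1) c1 c2 by simp
  qed
  define H where "H = \<sigma>0 div G"
  have GH: "\<sigma>0 = G * H" unfolding H_def using Gd(1) by simp
  have H0: "H \<noteq> 0" using GH deg(1) by auto
  define a where "a t = gcd \<sigma>0 (s t) div G" for t
  have ga: "gcd \<sigma>0 (s t) = G * a t" for t unfolding a_def using Gd(1) Gs[of t] by simp
  have aH: "a t dvd H" for t
  proof -
    have "G * a t dvd G * H" using ga[of t] GH by (metis gcd_dvd1)
    thus ?thesis using G0 by simp
  qed
  have a0: "a t \<noteq> 0" for t using ga[of t] deg(1) by (metis gcd_eq_0_iff mult_zero_right)
  have acop: "coprime (a t) (a u)" if "t \<noteq> u" for t u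
  proof (rule coprimeI)
    fix c assume c: "c dvd a t" "c dvd a u"
    have "G * c dvd gcd \<sigma>0 (s t)" "G * c dvd gcd \<sigma>0 (s u)" using c ga by (auto intro: mult_dvd_mono)
    hence "G * c dvd \<sigma>0" "G * c dvd s t" "G * c dvd s u" by (auto dest: dvd_trans[OF _ gcd_dvd1] dvd_trans[OF _ gcd_dvd2])
    hence "G * c dvd G * 1" using comm that by simp
    thus "is_unit c" using G0 by simp
  qed
  have adeg: "tdeg H \<le> tdeg (a t) + 2" for t
  proof -
    have "tdeg \<sigma>0 = tdeg G + tdeg H" using GH tdeg_mult[OF G0 H0] by simp
    moreover have "tdeg (gcd \<sigma>0 (s t)) = tdeg G + tdeg (a t)" using ga[of t] tdeg_mult[OF G0 a0] by simp
    ultimately show ?thesis using key[of t] by linarith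
  qed
  have prod: "a 0 * a 1 * a 2 * a 3 dvd H"
  proof -
    have c01: "coprime (a 0) (a 1)" by (rule acop) simp
    have "a 0 * a 1 dvd H" using aH c01 by (simp add: divides_mult)
    moreover have "coprime (a 0 * a 1) (a 2)" using acop[of 0 2] acop[of 1 2] by simp
    ultimately have d3: "a 0 * a 1 * a 2 dvd H" using aH by (simp add: divides_mult)
    have "coprime (a 0 * a 1 * a 2) (a 3)" using acop[of 0 3] acop[of 1 3] acop[of 2 3] by simp
    thus ?thesis using d3 aH by (simp add: divides_mult)
  qed
  have "tdeg (a 0 * a 1 * a 2 * a 3) = tdeg (a 0) + tdeg (a 1) + tdeg (a 2) + tdeg (a 3)"
    using a0 by (simp add: tdeg_mult)
  moreover have "tdeg (a 0 * a 1 * a 2 * a 3) \<le> tdeg H" using tdeg_dvd[OF prod H0] .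
  ultimately have Hdeg: "tdeg H \<le> 2" using adeg[of 0] adeg[of 1] adeg[of 2] adeg[of 3] by linarith
  define \<beta>1 where "\<beta>1 = s1 div G"
  define \<beta>2 where "\<beta>2 = s2 div G"
  have G1: "s1 = G * \<beta>1" unfolding \<beta>1_def using Gd(2) by simp
  have G2: "s2 = G * \<beta>2" unfolding \<beta>2_def using Gd(3) by simp
  have b10: "\<beta>1 \<noteq> 0" "\<beta>2 \<noteq> 0" using G1 G2 deg(2,3) by auto
  have tH: "k = tdeg G + tdeg H" using GH tdeg_mult[OF G0 H0] deg(4) by simp
  have t1: "k = tdeg G + tdeg \<beta>1" using G1 tdeg_mult[OF G0 b10(1)] deg(5) by simp
  have t2: "k = tdeg G + tdeg \<beta>2" using G2 tdeg_mult[OF G0 b10(2)] deg(6) by simp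
  have Hpos: "tdeg H \<noteq> 0"
  proof
    assume "tdeg H = 0"
    then have "tdeg \<beta>1 = 0" using tH t1 by simp
    from unit_bconst[OF tdeg0_unit[OF b10(1) this]] obtain c1 where c1: "\<beta>1 = bconst c1" by blast
    from unit_bconst[OF tdeg0_unit[OF H0 \<open>tdeg H = 0\<close>]] obtain c where c: "c \<noteq> 0" "H = bconst c" by blast
    have "bconst c1 * \<sigma>0 + bconst (- c) * s1 + bconst 0 * s2 = G * (bconst c1 * bconst c + bconst (-c) * bconst c1)"
      using GH G1 c c1 by (simp add: algebra_simps bconst_0)
    also have "\<dots> = 0" by (simp add: bconst_mult bconst_add bconst_0)
    finally have "- c = 0" using indep unfolding lin_indep3_def by blast
    with c show False by simp
  qed
  have GPi: "G \<in> Pi (k - 1)" using tH Hpos by (simp add: Pi_def)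
  have BPi: "H \<in> Pi 2" "\<beta>1 \<in> Pi 2" "\<beta>2 \<in> Pi 2" using Hdeg tH t1 t2 by (auto simp: Pi_def)
  have triv: "is_unit c" if "c dvd H" "c dvd \<beta>1" "c dvd \<beta>2" for c
  proof -
    have "G * c dvd \<sigma>0" "G * c dvd s1" "G * c dvd s2" using that GH G1 G2 by (auto intro: mult_dvd_mono)
    hence "G * c dvd G * 1" unfolding G_def by simp
    thus ?thesis using G0 by simp
  qed
  have part2: "\<forall>\<sigma>' \<gamma>0 \<gamma>1. \<sigma>0 = \<sigma>' * \<gamma>0 \<and> s1 = \<sigma>' * \<gamma>1 \<and> coprime \<gamma>0 \<gamma>1 \<longrightarrow>
            (\<exists>c. c \<noteq> 0 \<and> \<sigma>' = bconst c * G)" if cop: "coprime H \<beta>1"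
  proof (intro allI impI)
    fix \<sigma>' \<gamma>0 \<gamma>1 assume A: "\<sigma>0 = \<sigma>' * \<gamma>0 \<and> s1 = \<sigma>' * \<gamma>1 \<and> coprime \<gamma>0 \<gamma>1"
    have "gcd \<sigma>0 s1 = normalize \<sigma>'" using A gcd_mult_left[of \<sigma>' \<gamma>0 \<gamma>1] by simp
    moreover have "gcd \<sigma>0 s1 = normalize G" using GH G1 cop gcd_mult_left[of G H \<beta>1] by simp
    ultimately have "normalize \<sigma>' = normalize G" by simp
    hence "\<sigma>' dvd G" "G dvd \<sigma>'" using associated_iff_dvd by blast+
    then obtain x y where x: "G = \<sigma>' * x" and y: "\<sigma>' = G * y" by blast
    have "G * 1 = G * (y * x)" using x y by (simp add: ac_simps)
    hence "y * x = 1" using G0 by (metis mult_left_cancel)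
    hence "is_unit y" by (metis dvd_triv_left)
    from unit_bconst[OF this] obtain c where "c \<noteq> 0" "y = bconst c" by blast
    thus "\<exists>c. c \<noteq> 0 \<and> \<sigma>' = bconst c * G" using y by (auto simp: ac_simps)
  qed
  have part3: "\<forall>\<epsilon>::real. \<epsilon> > 0 \<longrightarrow> coprime H (\<beta>1 + bconst \<epsilon> * \<beta>2)"
    if "\<exists>r. tdeg r \<ge> 1 \<and> r dvd H \<and> r dvd \<beta>1" "\<exists>r. tdeg r \<ge> 1 \<and> r dvd H \<and> r dvd \<beta>2"
  proof (intro allI impI)
    fix \<epsilon> :: real assume "\<epsilon> > 0"
    have eu: "is_unit (bconst \<epsilon>)" using \<open>\<epsilon> > 0\<close> by (simp add: bconst_unit)
    from that obtain r r' where r: "tdeg r \<ge> 1" "r dvd H" "r dvd \<beta>1"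
      and r': "tdeg r' \<ge> 1" "r' dvd H" "r' dvd \<beta>2" by blast
    have crr: "coprime r r'"
    proof (rule coprimeI)
      fix e assume "e dvd r" "e dvd r'"
      thus "is_unit e" using r r' by (auto intro: triv dest: dvd_trans)
    qed
    have "r * r' dvd H" using r r' crr by (simp add: divides_mult)
    then obtain q where q: "H = r * r' * q" by blast
    have nz: "r \<noteq> 0" "r' \<noteq> 0" "q \<noteq> 0" using q H0 by auto
    have "tdeg H = tdeg r + tdeg r' + tdeg q" using q nz by (simp add: tdeg_mult)
    hence "tdeg q = 0" using Hdeg r(1) r'(1) by linarith
    hence qu: "is_unit q" using tdeg0_unit nz(3) by blast
    show "coprime H (\<beta>1 + bconst \<epsilon> * \<beta>2)"
    proof (rule coprimeI)
      fix d assume d: "d dvd H" "d dvd \<beta>1 + bconst \<epsilon> * \<beta>2"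
      have cdr: "coprime d r"
      proof (rule coprimeI)
        fix e assume e: "e dvd d" "e dvd r"
        have e1: "e dvd \<beta>1" using e r dvd_trans by blast
        have "e dvd (\<beta>1 + bconst \<epsilon> * \<beta>2) - \<beta>1" using e d e1 by (meson dvd_diff dvd_trans)
        hence "e dvd \<beta>2" using eu by (simp add: dvd_mult_unit_iff')
        thus "is_unit e" using e d e1 by (meson dvd_trans triv)
      qed
      have cdr': "coprime d r'"
      proof (rule coprimeI)
        fix e assume e: "e dvd d" "e dvd r'"
        have e2: "e dvd \<beta>2" using e r' dvd_trans by blast
        have "e dvd (\<beta>1 + bconst \<epsilon> * \<beta>2) - bconst \<epsilon> * \<beta>2" using e d e2 by (meson dvd_diff dvd_trans dvd_mult)
        hence "e dvd \<beta>1" by simp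
        thus "is_unit e" using e d e2 by (meson dvd_trans triv)
      qed
      have "coprime d (r * r')" using cdr cdr' by simp
      moreover have "d dvd r * r'" using d(1) q qu by (metis dvd_mult_unit_iff)
      ultimately show "is_unit d" by (meson coprime_common_divisor dvd_refl)
    qed
  qed
  show ?thesis
    apply (rule exI[of _ G], rule exI[of _ H], rule exI[of _ \<beta>1], rule exI[of _ \<beta>2])
    using GPi BPi GH G1 G2 part2 part3 by blast
qed

end
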